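(* Let $f\in C^1[0,1]$ with $f(0)=0$, $h:=f'$, and let $q$ satisfy condition (q). If $$c>\sup_{\varphi\in(0,1]}\frac{f(\varphi)}{\varphi}+2\sqrt{\sup_{\varphi\in(0,1]}\frac{q(\varphi)}{\varphi}},$$ then there exists $z\in C[0,1]\cap C^1(0,1)$ with $\dot z(\varphi)=h(\varphi)-c-q(\varphi)/z(\varphi)$ and $z(\varphi)<0$ for $\varphi\in(0,1)$, and $z(0)=z(1)=0$.
   Context: Condition (q): $q\in C[0,1]$, $q>0$ on $(0,1)$, $q(0)=q(1)=0$, and $\limsup_{\varphi\to0^+}q(\varphi)/\varphi<+\infty$. *)

theory Defs
  imports "HOL-Analysis.Analysis" "HOL-Library.Extended_Real"
begin

definition cond_q :: "(real \<Rightarrow> real) \<Rightarrow> bool" where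
  "cond_q q \<longleftrightarrow> continuous_on {0..1} q \<and> (\<forall>x\<in>{0<..<1}. q x > 0) \<and> q 0 = 0 \<and> q 1 = 0
     \<and> Limsup (at_right 0) (\<lambda>x. ereal (q x / x)) < \<infinity>"

end

theory Submission
  imports Defs
begin

lemma deriv_ub:
  fixes f f' :: "real \<Rightarrow> real"
  assumes ab: "a \<le> b" and cf: "continuous_on {a..b} f"
    and d: "\<And>x. x \<in> {a<..<b} \<Longrightarrow> (f has_real_derivative f' x) (at x)"
    and bd: "\<And>x. x \<in> {a<..<b} \<Longrightarrow> f' x \<le> K"
  shows "f b \<le> f a + K * (b - a)"
proof (cases "a = b")
  case True then show ?thesis by simp
next
  case False
  hence lt: "a < b" using ab by simp
  obtain z where z: "a < z" "z < b" "f b - f a = (\<lambda>t. f' z * t) (b - a)"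
    using mvt[OF lt cf, of "\<lambda>x t. f' x * t"] d
    by (metis greaterThanLessThan_iff has_field_derivative_imp_has_derivative)
  have "f' z * (b - a) \<le> K * (b - a)" using bd[of z] z lt by (intro mult_right_mono) auto
  then show ?thesis using z(3) by simp
qed



lemma deriv_lb:
  fixes f f' :: "real \<Rightarrow> real"
  assumes ab: "a \<le> b" and cf: "continuous_on {a..b} f"
    and d: "\<And>x. x \<in> {a<..<b} \<Longrightarrow> (f has_real_derivative f' x) (at x)"
    and bd: "\<And>x. x \<in> {a<..<b} \<Longrightarrow> K \<le> f' x"
  shows "f a + K * (b - a) \<le> f b"
proof -
  have "(\<lambda>x. - f x) b \<le> (\<lambda>x. - f x) a + (-K) * (b - a)"
  proof (rule deriv_ub[OF ab, where f'="\<lambda>x. - f' x"])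
    show "continuous_on {a..b} (\<lambda>x. - f x)" using cf by (intro continuous_intros)
    show "((\<lambda>x. - f x) has_real_derivative - f' x) (at x)" if "x \<in> {a<..<b}" for x
      using d[OF that] by (rule DERIV_minus)
    show "- f' x \<le> - K" if "x \<in> {a<..<b}" for x using bd[OF that] by simp
  qed
  then show ?thesis by simp
qed

lemma backward_exist:
  fixes G :: "real \<Rightarrow> real \<Rightarrow> real" and \<epsilon> L M :: real
  assumes Gcont: "\<And>y. continuous_on {0..1} y \<Longrightarrow> continuous_on {0..1} (\<lambda>s. G s (y s))"
    and Gmono: "\<And>s y1 y2. s \<in> {0..1} \<Longrightarrow> y1 \<le> y2 \<Longrightarrow> G s y1 \<le> G s y2"
    and Glip: "\<And>s y1 y2. s \<in> {0..1} \<Longrightarrow> y1 \<le> y2 \<Longrightarrow> G s y2 - G s y1 \<le> L * (y2 - y1)"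
    and Gbd: "\<And>s y. s \<in> {0..1} \<Longrightarrow> \<bar>G s y\<bar> \<le> M"
    and Lpos: "L > 0"
  shows "\<exists>y. continuous_on {0..1} y \<and> y 1 = \<epsilon> \<and>
           (\<forall>s\<in>{0<..<1}. (y has_real_derivative G s (y s)) (at s))"
proof -
  define K where "K s v = G s v - L * v" for s v
  define gg where "gg y s = exp (- L * s) * K s (y s)" for y :: "real \<Rightarrow> real" and s
  define T where "T y \<phi> = exp (L * \<phi>) * (exp (-L) * \<epsilon> - integral {\<phi>..1} (gg y))" for y \<phi>
  define R where "R = exp L * M / L"
  define lo where "lo = \<epsilon> - R"
  define hi where "hi = \<epsilon> + R"
  define Kl where "Kl = M + L * (2 * R)"
  define Lat where "Lat = {y :: real \<Rightarrow> real. (\<forall>\<phi>\<in>{0..1}. lo \<le> y \<phi> \<and> y \<phi> \<le> hi) \<and> Kl-lipschitz_on {0..1} y}"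
  have M0: "M \<ge> 0" using Gbd[of 0 0] by auto
  have R0: "R \<ge> 0" using M0 Lpos by (simp add: R_def)
  have Kl0: "Kl \<ge> 0" using M0 R0 Lpos by (simp add: Kl_def)
  have RL: "exp (-L) * R = M / L" unfolding R_def using Lpos
    by (simp add: exp_minus field_simps)
  have Kmono: "K s y2 \<le> K s y1" if "s \<in> {0..1}" "y1 \<le> y2" for s y1 y2
    using Glip[OF that] unfolding K_def by (simp add: algebra_simps)
  have gcont: "continuous_on {0..1} (gg y)" if "continuous_on {0..1} y" for y
    unfolding gg_def K_def by (intro continuous_intros Gcont that)
  have Tder: "(T y has_real_derivative (L * T y \<phi> + K \<phi> (y \<phi>))) (at \<phi> within {0..1})"
    if cy: "continuous_on {0..1} y" and \<phi>: "\<phi> \<in> {0..1}" for y \<phi>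
  proof -
    have i: "((\<lambda>x. integral {x..1} (gg y)) has_real_derivative - gg y \<phi>) (at \<phi> within {0..1})"
      using integral_has_real_derivative'[OF gcont[OF cy] \<phi>] .
    have e: "((\<lambda>x. exp (L * x)) has_real_derivative exp (L * \<phi>) * L) (at \<phi> within {0..1})"
      by (auto intro!: derivative_eq_intros)
    have "((\<lambda>x. exp (L * x) * (exp (-L) * \<epsilon> - integral {x..1} (gg y))) has_real_derivative
       (exp (L * \<phi>) * (0 - - gg y \<phi>) + exp (L * \<phi>) * L * (exp (-L) * \<epsilon> - integral {\<phi>..1} (gg y))))
       (at \<phi> within {0..1})"
      by (rule DERIV_mult'[OF e DERIV_diff[OF DERIV_const i]])
    moreover have "exp (L * \<phi>) * exp (- L * \<phi>) = 1" by (simp add: exp_add[symmetric])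
    moreover have "T y = (\<lambda>x. exp (L * x) * (exp (-L) * \<epsilon> - integral {x..1} (gg y)))"
      by (rule ext) (simp add: T_def)
    ultimately show ?thesis
      by (simp add: T_def gg_def algebra_simps)
  qed
  have Tcont: "continuous_on {0..1} (T y)" if cy: "continuous_on {0..1} y" for y
    by (rule DERIV_continuous_on[OF Tder[OF cy]])
  have Tderat: "(T y has_real_derivative (L * T y \<phi> + K \<phi> (y \<phi>))) (at \<phi>)"
    if cy: "continuous_on {0..1} y" and \<phi>: "\<phi> \<in> {0<..<1}" for y \<phi>
    using Tder[OF cy, of \<phi>] \<phi> by (simp add: at_within_Icc_at)
  have T1: "T y 1 = \<epsilon>" for y
    by (simp add: T_def exp_add[symmetric])
  have Tmono: "T y1 \<phi> \<le> T y2 \<phi>"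
    if c1: "continuous_on {0..1} y1" and c2: "continuous_on {0..1} y2"
      and le: "\<And>s. s \<in> {0..1} \<Longrightarrow> y1 s \<le> y2 s" and \<phi>: "\<phi> \<in> {0..1}" for y1 y2 \<phi>
  proof -
    have sub: "{\<phi>..1} \<subseteq> {0..1}" using \<phi> by auto
    have "integral {\<phi>..1} (gg y2) \<le> integral {\<phi>..1} (gg y1)"
    proof (rule integral_le)
      show "gg y2 integrable_on {\<phi>..1}"
        by (rule integrable_continuous_interval, rule continuous_on_subset[OF gcont[OF c2] sub])
      show "gg y1 integrable_on {\<phi>..1}"
        by (rule integrable_continuous_interval, rule continuous_on_subset[OF gcont[OF c1] sub])
      show "gg y2 x \<le> gg y1 x" if "x \<in> {\<phi>..1}" for x
        unfolding gg_def using Kmono[of x "y1 x" "y2 x"] le[of x] that sub by auto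
    qed
    then show ?thesis unfolding T_def by (intro mult_left_mono) auto
  qed
  have Latc: "continuous_on {0..1} y" if "y \<in> Lat" for y
    using that unfolding Lat_def by (auto intro: lipschitz_on_continuous_on)
  have Tbnd: "lo \<le> T y \<phi> \<and> T y \<phi> \<le> hi" if yL: "y \<in> Lat" and \<phi>: "\<phi> \<in> {0..1}" for y \<phi>
  proof -
    have cy: "continuous_on {0..1} y" using Latc[OF yL] .
    have ybd: "lo \<le> y s \<and> y s \<le> hi" if "s \<in> {0..1}" for s using yL that unfolding Lat_def by auto
    have sub: "{\<phi>..1} \<subseteq> {0..1}" using \<phi> by auto
    have cw: "continuous_on {\<phi>..1} (T y)" using continuous_on_subset[OF Tcont[OF cy] sub] .
    have key: "M / L \<le> P" if P: "exp (-L) * (R + M/L) \<le> exp (- L * \<phi>) * P" for P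
    proof (cases "P < 0")
      case True
      then have "exp (- L * \<phi>) * P < 0" by (simp add: mult_pos_neg)
      moreover have "0 \<le> exp (-L) * (R + M/L)" using R0 M0 Lpos by simp
      ultimately show ?thesis using P by linarith
    next
      case False
      have "exp (- L * \<phi>) \<le> 1" using \<phi> Lpos by simp
      then have "exp (- L * \<phi>) * P \<le> P" using False by (simp add: mult_left_le_one_le)
      moreover have "M / L \<le> exp (-L) * (R + M/L)"
        using RL M0 Lpos by (simp add: distrib_left)
      ultimately show ?thesis using P by linarith
    qed
    have up: "T y \<phi> \<le> hi"
    proof -
      define E where "E x = exp (- L * x) * (hi - T y x + M/L)" for x
      have "E 1 \<le> E \<phi> + 0 * (1 - \<phi>)"
      proof (rule deriv_ub[where f'="\<lambda>x. exp (- L * x) * (- L * (hi - y x) - M - G x (y x))"])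
        show "\<phi> \<le> 1" using \<phi> by simp
        show "continuous_on {\<phi>..1} E" unfolding E_def by (intro continuous_intros cw)
        show "(E has_real_derivative exp (- L * x) * (- L * (hi - y x) - M - G x (y x))) (at x)"
          if x: "x \<in> {\<phi><..<1}" for x
        proof -
          have x01: "x \<in> {0<..<1}" using x \<phi> by auto
          have ee: "((\<lambda>x. exp (- L * x)) has_real_derivative exp (- L * x) * - L) (at x)"
            by (auto intro!: derivative_eq_intros)
          have "(E has_real_derivative (exp (- L * x) * ((0 - (L * T y x + K x (y x))) + 0) + exp (- L * x) * - L * (hi - T y x + M/L))) (at x)"
            unfolding E_def[abs_def]
            by (rule DERIV_mult'[OF ee DERIV_add[OF DERIV_diff[OF DERIV_const Tderat[OF cy x01]] DERIV_const]])
          then show ?thesis using Lpos by (simp add: K_def algebra_simps)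
        qed
        show "exp (- L * x) * (- L * (hi - y x) - M - G x (y x)) \<le> 0" if x: "x \<in> {\<phi><..<1}" for x
        proof -
          have "x \<in> {0..1}" using x \<phi> by auto
          then have "- L * (hi - y x) - M - G x (y x) \<le> 0"
          proof -
            assume x1: "x \<in> {0..1}"
            have "0 \<le> L * (hi - y x)" using ybd[OF x1] Lpos by simp
            moreover have "\<bar>G x (y x)\<bar> \<le> M" using Gbd[OF x1] .
            ultimately show ?thesis by (simp add: abs_le_iff)
          qed
          then show ?thesis by (simp add: mult_nonneg_nonpos)
        qed
      qed
      then have "exp (-L) * (R + M/L) \<le> exp (- L * \<phi>) * (hi - T y \<phi> + M/L)"
        by (simp add: E_def T1 hi_def)
      from key[OF this] show ?thesis by simp
    qed
    have dn: "lo \<le> T y \<phi>"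
    proof -
      define E where "E x = exp (- L * x) * (T y x - lo + M/L)" for x
      have "E 1 \<le> E \<phi> + 0 * (1 - \<phi>)"
      proof (rule deriv_ub[where f'="\<lambda>x. exp (- L * x) * (- L * (y x - lo) - M + G x (y x))"])
        show "\<phi> \<le> 1" using \<phi> by simp
        show "continuous_on {\<phi>..1} E" unfolding E_def by (intro continuous_intros cw)
        show "(E has_real_derivative exp (- L * x) * (- L * (y x - lo) - M + G x (y x))) (at x)"
          if x: "x \<in> {\<phi><..<1}" for x
        proof -
          have x01: "x \<in> {0<..<1}" using x \<phi> by auto
          have ee: "((\<lambda>x. exp (- L * x)) has_real_derivative exp (- L * x) * - L) (at x)"
            by (auto intro!: derivative_eq_intros)
          have "(E has_real_derivative (exp (- L * x) * (((L * T y x + K x (y x)) - 0) + 0) + exp (- L * x) * - L * (T y x - lo + M/L))) (at x)"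
            unfolding E_def[abs_def]
            by (rule DERIV_mult'[OF ee DERIV_add[OF DERIV_diff[OF Tderat[OF cy x01] DERIV_const] DERIV_const]])
          then show ?thesis using Lpos by (simp add: K_def algebra_simps)
        qed
        show "exp (- L * x) * (- L * (y x - lo) - M + G x (y x)) \<le> 0" if x: "x \<in> {\<phi><..<1}" for x
        proof -
          have "x \<in> {0..1}" using x \<phi> by auto
          then have "- L * (y x - lo) - M + G x (y x) \<le> 0"
          proof -
            assume x1: "x \<in> {0..1}"
            have "0 \<le> L * (y x - lo)" using ybd[OF x1] Lpos by simp
            moreover have "\<bar>G x (y x)\<bar> \<le> M" using Gbd[OF x1] .
            ultimately show ?thesis by (simp add: abs_le_iff)
          qed
          then show ?thesis by (simp add: mult_nonneg_nonpos)
        qed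
      qed
      then have "exp (-L) * (R + M/L) \<le> exp (- L * \<phi>) * (T y \<phi> - lo + M/L)"
        by (simp add: E_def T1 lo_def)
      from key[OF this] show ?thesis by simp
    qed
    show ?thesis using up dn by simp
  qed

  have TLat: "T y \<in> Lat" if yL: "y \<in> Lat" for y
  proof -
    have cy: "continuous_on {0..1} y" using Latc[OF yL] .
    have ybd: "lo \<le> y s \<and> y s \<le> hi" if "s \<in> {0..1}" for s using yL that unfolding Lat_def by auto
    have wbd: "lo \<le> T y s \<and> T y s \<le> hi" if "s \<in> {0..1}" for s using Tbnd[OF yL that] .
    have dbd: "\<bar>L * T y s + K s (y s)\<bar> \<le> Kl" if s: "s \<in> {0..1}" for s
    proof -
      have e1: "L * T y s + K s (y s) = G s (y s) + L * (T y s - y s)" by (simp add: K_def algebra_simps)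
      have "\<bar>T y s - y s\<bar> \<le> 2 * R" using wbd[OF s] ybd[OF s] by (simp add: lo_def hi_def abs_le_iff)
      then have "L * \<bar>T y s - y s\<bar> \<le> L * (2 * R)" using Lpos by (intro mult_left_mono) auto
      moreover have "\<bar>L * (T y s - y s)\<bar> = L * \<bar>T y s - y s\<bar>" using Lpos by (simp add: abs_mult)
      moreover have "\<bar>G s (y s)\<bar> \<le> M" using Gbd[OF s] .
      ultimately show ?thesis unfolding Kl_def e1 by linarith
    qed
    have "Kl-lipschitz_on {0..1} (T y)"
    proof (rule lipschitz_on_leI)
      show "0 \<le> Kl" by (rule Kl0)
      fix x z :: real assume x: "x \<in> {0..1}" and z: "z \<in> {0..1}" and xz: "x \<le> z"
      have sub: "{x..z} \<subseteq> {0..1}" using x z by auto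
      have cw: "continuous_on {x..z} (T y)" using continuous_on_subset[OF Tcont[OF cy] sub] .
      have der: "(T y has_real_derivative (L * T y t + K t (y t))) (at t)" if "t \<in> {x<..<z}" for t
        using Tderat[OF cy, of t] x z that by auto
      have b: "\<bar>L * T y t + K t (y t)\<bar> \<le> Kl" if "t \<in> {x<..<z}" for t using dbd[of t] x z that by auto
      have u: "T y z \<le> T y x + Kl * (z - x)"
        by (rule deriv_ub[OF xz cw der]) (use b in \<open>auto simp: abs_le_iff\<close>)
      have l: "T y x + (-Kl) * (z - x) \<le> T y z"
      proof (rule deriv_lb[OF xz cw der])
        fix t assume "t \<in> {x<..<z}"
        from b[OF this] show "- Kl \<le> L * T y t + K t (y t)" by (simp add: abs_le_iff)
      qed
      show "dist (T y x) (T y z) \<le> Kl * dist x z" using u l xz by (simp add: dist_real_def abs_le_iff)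
    qed
    then show ?thesis using wbd unfolding Lat_def by auto
  qed
  define P where "P = {y \<in> Lat. \<forall>\<phi>\<in>{0..1}. T y \<phi> \<le> y \<phi>}"
  define Y where "Y \<phi> = Inf {y \<phi> | y. y \<in> P}" for \<phi>
  have hiL: "(\<lambda>_. hi) \<in> Lat" unfolding Lat_def using R0 Kl0 by (auto simp: lo_def hi_def intro: lipschitz_onI)
  have hiP: "(\<lambda>_. hi) \<in> P" unfolding P_def using hiL Tbnd[OF hiL] by auto
  have ne: "{y \<phi> | y. y \<in> P} \<noteq> {}" for \<phi> using hiP by blast
  have bb: "bdd_below {y \<phi> | y. y \<in> P}" if "\<phi> \<in> {0..1}" for \<phi>
    unfolding bdd_below_def using that by (intro exI[of _ lo]) (auto simp: P_def Lat_def)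
  have Ylo: "lo \<le> Y \<phi>" if "\<phi> \<in> {0..1}" for \<phi>
    unfolding Y_def by (rule cInf_greatest[OF ne]) (use that in \<open>auto simp: P_def Lat_def\<close>)
  have Yhi: "Y \<phi> \<le> hi" if "\<phi> \<in> {0..1}" for \<phi>
  proof -
    have "Y \<phi> \<le> (\<lambda>_. hi) \<phi>" unfolding Y_def by (rule cInf_lower[OF _ bb[OF that]], rule CollectI, rule exI[of _ "\<lambda>_. hi"]) (simp add: hiP)
    then show ?thesis by simp
  qed
  have Ymin: "Y \<phi> \<le> y \<phi>" if "y \<in> P" "\<phi> \<in> {0..1}" for y \<phi>
    unfolding Y_def by (rule cInf_lower[OF _ bb[OF that(2)]]) (use that in blast)
  have Yl: "Y x - Kl * dist x z \<le> Y z" if x: "x \<in> {0..1}" and z: "z \<in> {0..1}" for x z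
  proof -
    have "Y x - Kl * dist x z \<le> w" if wP: "w \<in> {y z | y. y \<in> P}" for w
    proof -
      obtain y where y: "y \<in> P" "w = y z" using wP by blast
      have "Y x \<le> y x" by (rule Ymin[OF y(1) x])
      moreover have "dist (y x) (y z) \<le> Kl * dist x z"
        using y(1) x z unfolding P_def Lat_def by (auto intro: lipschitz_onD)
      ultimately show ?thesis using y(2) by (simp add: dist_real_def abs_le_iff)
    qed
    then show ?thesis unfolding Y_def[of z] by (intro cInf_greatest[OF ne]) auto
  qed
  have YL: "Y \<in> Lat"
  proof -
    have "Kl-lipschitz_on {0..1} Y"
    proof (rule lipschitz_onI[OF _ Kl0])
      fix x z :: real assume x: "x \<in> {0..1}" and z: "z \<in> {0..1}"
      show "dist (Y x) (Y z) \<le> Kl * dist x z"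
        using Yl[OF x z] Yl[OF z x] by (simp add: dist_real_def abs_minus_commute abs_le_iff)
    qed
    then show ?thesis unfolding Lat_def using Ylo Yhi by auto
  qed
  have cY: "continuous_on {0..1} Y" by (rule Latc[OF YL])
  have TYle: "T Y \<phi> \<le> Y \<phi>" if \<phi>: "\<phi> \<in> {0..1}" for \<phi>
  proof -
    have "T Y \<phi> \<le> w" if wP: "w \<in> {y \<phi> | y. y \<in> P}" for w
    proof -
      obtain y where y: "y \<in> P" "w = y \<phi>" using wP by blast
      have yL: "y \<in> Lat" using y(1) unfolding P_def by auto
      have "T Y \<phi> \<le> T y \<phi>" by (rule Tmono[OF cY Latc[OF yL] _ \<phi>]) (use Ymin[OF y(1)] in auto)
      also have "\<dots> \<le> y \<phi>" using y(1) \<phi> unfolding P_def by auto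
      finally show ?thesis using y(2) by simp
    qed
    then show ?thesis unfolding Y_def[of \<phi>] by (intro cInf_greatest[OF ne]) auto
  qed
  have TYP: "T Y \<in> P"
  proof -
    have "T (T Y) \<phi> \<le> T Y \<phi>" if "\<phi> \<in> {0..1}" for \<phi>
      by (rule Tmono[OF Tcont[OF cY] cY _ that]) (use TYle in auto)
    then show ?thesis unfolding P_def using TLat[OF YL] by auto
  qed
  have Yeq: "T Y \<phi> = Y \<phi>" if "\<phi> \<in> {0..1}" for \<phi>
    using TYle[OF that] Ymin[OF TYP that] by simp
  show ?thesis
  proof (intro exI[of _ "T Y"] conjI ballI)
    show "continuous_on {0..1} (T Y)" by (rule Tcont[OF cY])
    show "T Y 1 = \<epsilon>" by (rule T1)
    fix s :: real assume s: "s \<in> {0<..<1}"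
    have "L * T Y s + K s (Y s) = G s (T Y s)" using Yeq[of s] s by (simp add: K_def)
    then show "(T Y has_real_derivative G s (T Y s)) (at s)" using Tderat[OF cY s] by simp
  qed
qed




locale ctx =
  fixes h q :: "real \<Rightarrow> real" and c :: real
  assumes h_cont: "continuous_on {0..1} h"
    and qc: "continuous_on {0..1} q"
    and qpos: "\<And>x. x \<in> {0<..<1} \<Longrightarrow> q x > 0"
    and q0: "q 0 = 0" and q1: "q 1 = 0"
begin

lemma qnn: "x \<in> {0..1} \<Longrightarrow> 0 \<le> q x"
  using qpos[of x] q0 q1 by (cases "x = 0 \<or> x = 1") (auto simp: less_eq_real_def)

lemma hbound: "\<exists>Hb\<ge>0. \<forall>x\<in>{0..1}. \<bar>h x\<bar> \<le> Hb"
proof -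
  have "compact (h ` {0..1})" by (rule compact_continuous_image[OF h_cont compact_Icc])
  then obtain B where "\<forall>v\<in>h ` {0..1}. norm v \<le> B" using compact_imp_bounded bounded_iff by metis
  then show ?thesis by (intro exI[of _ "\<bar>B\<bar>"]) force
qed

lemma qbound: "\<exists>Q>0. \<forall>x\<in>{0..1}. q x \<le> Q"
proof -
  have "compact (q ` {0..1})" by (rule compact_continuous_image[OF qc compact_Icc])
  then obtain B where "\<forall>v\<in>q ` {0..1}. norm v \<le> B" using compact_imp_bounded bounded_iff by metis
  then show ?thesis by (intro exI[of _ "\<bar>B\<bar> + 1"]) force
qed

lemma Cbound: "\<exists>C>0. \<forall>x\<in>{0..1}. c - h x \<le> C"
proof -
  obtain Hb where "Hb \<ge> 0" "\<forall>x\<in>{0..1}. \<bar>h x\<bar> \<le> Hb" using hbound by blast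
  then show ?thesis by (intro exI[of _ "\<bar>c\<bar> + Hb + 1"]) force
qed

definition sol :: "real \<Rightarrow> real \<Rightarrow> (real \<Rightarrow> real) \<Rightarrow> bool" where
  "sol a e y \<longleftrightarrow> continuous_on {a..1} y \<and> y 1 = e \<and> (\<forall>s\<in>{a..1}. y s > 0) \<and>
     (\<forall>s\<in>{a<..<1}. (y has_real_derivative (c - h s - q s / y s)) (at s))"

lemma exact_exist:
  assumes e: "0 < \<epsilon>" and a: "0 < a" "a < 1"
  shows "\<exists>y. sol a \<epsilon> y"
proof -
  obtain C where C: "C > 0" "\<And>x. x\<in>{0..1} \<Longrightarrow> c - h x \<le> C" using Cbound by blast
  obtain Q where Q: "Q > 0" "\<And>x. x\<in>{0..1} \<Longrightarrow> q x \<le> Q" using qbound by blast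
  obtain Hb where Hb: "Hb \<ge> 0" "\<And>x. x\<in>{0..1} \<Longrightarrow> \<bar>h x\<bar> \<le> Hb" using hbound by blast
  define b where "b = 1 - \<epsilon> / (2 * C)"
  have b1: "b < 1" using e C by (simp add: b_def)
  obtain \<delta> where \<delta>: "\<delta> > 0" "\<delta> < \<epsilon> / 2" "\<And>s. s \<in> {a..b} \<Longrightarrow> C * \<delta> < q s"
  proof (cases "a \<le> b")
    case True
    obtain s0 where s0: "s0 \<in> {a..b}" "\<And>s. s \<in> {a..b} \<Longrightarrow> q s0 \<le> q s"
      using continuous_attains_inf[of "{a..b}" q] True continuous_on_subset[OF qc, of "{a..b}"] a b1
      by fastforce
    have qs0: "q s0 > 0" using qpos[of s0] s0(1) a b1 by auto
    define \<delta> where "\<delta> = min (\<epsilon> / 4) (q s0 / (2 * C))"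
    show ?thesis
    proof (rule that[of \<delta>])
      show "\<delta> > 0" using e qs0 C by (simp add: \<delta>_def)
      show "\<delta> < \<epsilon> / 2" using e by (simp add: \<delta>_def)
      fix s assume "s \<in> {a..b}"
      have "C * \<delta> \<le> C * (q s0 / (2 * C))" using C by (intro mult_left_mono) (auto simp: \<delta>_def)
      also have "\<dots> = q s0 / 2" using C by simp
      also have "\<dots> < q s0" using qs0 by simp
      also have "\<dots> \<le> q s" by (rule s0(2)[OF \<open>s \<in> {a..b}\<close>])
      finally show "C * \<delta> < q s" .
    qed
  next
    case False
    show ?thesis by (rule that[of "\<epsilon> / 4"]) (use e False in auto)
  qed
  define G where "G s v = c - h s - q s / max v \<delta>" for s v
  define L where "L = Q / (\<delta> * \<delta>)"
  define M where "M = \<bar>c\<bar> + Hb + Q / \<delta>"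
  have "\<exists>y. continuous_on {0..1} y \<and> y 1 = \<epsilon> \<and> (\<forall>s\<in>{0<..<1}. (y has_real_derivative G s (y s)) (at s))"
  proof (rule backward_exist)
    show "continuous_on {0..1} (\<lambda>s. G s (y s))" if "continuous_on {0..1} y" for y
      unfolding G_def using \<delta>(1)
      by (intro continuous_intros h_cont qc that) auto
    show "G s y1 \<le> G s y2" if "s \<in> {0..1}" "y1 \<le> y2" for s y1 y2
    proof -
      have "q s / max y2 \<delta> \<le> q s / max y1 \<delta>"
        using qnn[OF that(1)] that(2) \<delta>(1) by (intro divide_left_mono) auto
      then show ?thesis unfolding G_def by simp
    qed
    show "G s y2 - G s y1 \<le> L * (y2 - y1)" if s: "s \<in> {0..1}" and y: "y1 \<le> y2" for s y1 y2
    proof -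
      define m1 where "m1 = max y1 \<delta>"
      define m2 where "m2 = max y2 \<delta>"
      have m: "\<delta> \<le> m1" "\<delta> \<le> m2" "m1 \<le> m2" "m2 - m1 \<le> y2 - y1" using y by (auto simp: m1_def m2_def)
      have pos: "0 < m1" "0 < m2" using m \<delta>(1) by auto
      have eq: "G s y2 - G s y1 = q s * (m2 - m1) / (m1 * m2)"
        unfolding G_def m1_def[symmetric] m2_def[symmetric] using pos by (simp add: field_simps)
      have "q s * (m2 - m1) / (m1 * m2) \<le> q s * (m2 - m1) / (\<delta> * \<delta>)"
        using qnn[OF s] m pos \<delta>(1) by (intro divide_left_mono mult_mono mult_nonneg_nonneg) auto
      also have "\<dots> \<le> Q * (y2 - y1) / (\<delta> * \<delta>)"
        using qnn[OF s] m Q(2)[OF s] \<delta>(1) by (intro divide_right_mono mult_mono) auto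
      finally show ?thesis unfolding eq L_def by simp
    qed
    show "\<bar>G s y\<bar> \<le> M" if s: "s \<in> {0..1}" for s y
    proof -
      have "q s / max y \<delta> \<le> Q / \<delta>"
        using qnn[OF s] Q(2)[OF s] \<delta>(1) by (intro frac_le) auto
      moreover have "0 \<le> q s / max y \<delta>" using qnn[OF s] \<delta>(1) by auto
      moreover have "\<bar>h s\<bar> \<le> Hb" using Hb(2)[OF s] .
      ultimately show ?thesis unfolding G_def M_def by (simp add: abs_le_iff) linarith
    qed
    show "L > 0" using Q \<delta> by (simp add: L_def)
  qed
  then obtain y where y: "continuous_on {0..1} y" "y 1 = \<epsilon>"
    "\<And>s. s \<in> {0<..<1} \<Longrightarrow> (y has_real_derivative G s (y s)) (at s)" by blast
  have GC: "G s v \<le> C" if "s \<in> {0..1}" for s v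
  proof -
    have "0 \<le> q s / max v \<delta>" using qnn[OF that] \<delta>(1) by auto
    then show ?thesis using C(2)[OF that] unfolding G_def by linarith
  qed
  have ylow: "\<epsilon> - C * (1 - s) \<le> y s" if s: "s \<in> {0..1}" for s
  proof -
    have "y 1 \<le> y s + C * (1 - s)"
    proof (rule deriv_ub)
      show "s \<le> 1" using s by simp
      show "continuous_on {s..1} y" using continuous_on_subset[OF y(1)] s by auto
      show "(y has_real_derivative G x (y x)) (at x)" if "x \<in> {s<..<1}" for x
        using y(3)[of x] that s by auto
      show "G x (y x) \<le> C" if "x \<in> {s<..<1}" for x using GC[of x] that s by auto
    qed
    then show ?thesis using y(2) by simp
  qed
  have ypos: "\<delta> \<le> y s" if s: "s \<in> {a..1}" for s
  proof (rule ccontr)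
    assume "\<not> \<delta> \<le> y s"
    then have ys: "y s < \<delta>" by simp
    define S where "S = {s..1} \<inter> y -` {..\<delta>}"
    have cS: "closed S" unfolding S_def
      by (rule continuous_closed_preimage[OF continuous_on_subset[OF y(1)]]) (use s a in auto)
    have neS: "S \<noteq> {}" using ys s by (auto simp: S_def)
    have bS: "bdd_above S" unfolding S_def by (auto intro: bdd_aboveI[of _ 1])
    define p where "p = Sup S"
    have pS: "p \<in> S" unfolding p_def by (rule closed_contains_Sup[OF neS bS cS])
    have p: "s \<le> p" "p \<le> 1" "y p \<le> \<delta>" using pS by (auto simp: S_def)
    have pb: "p < b"
    proof (rule ccontr)
      assume "\<not> p < b"
      then have "\<epsilon> - C * (1 - p) \<ge> \<epsilon> / 2" using C(1) by (simp add: b_def field_simps)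
      moreover have "\<epsilon> - C * (1 - p) \<le> y p" using ylow[of p] p s a by auto
      ultimately show False using p(3) \<delta>(2) by linarith
    qed
    have p01: "p \<in> {0<..<1}" using p pb b1 s a by auto
    have qp: "C * \<delta> < q p" using \<delta>(3)[of p] p pb s by auto
    have "G p (y p) = c - h p - q p / \<delta>" using p(3) by (simp add: G_def max_def)
    also have "\<dots> < 0"
    proof -
      have "C < q p / \<delta>" using qp \<delta>(1) by (simp add: field_simps)
      then show ?thesis using C(2)[of p] p01 by auto
    qed
    finally have neg: "G p (y p) < 0" .
    obtain d where d: "d > 0" "\<And>hh. hh > 0 \<Longrightarrow> hh < d \<Longrightarrow> y p > y (p + hh)"
      using DERIV_neg_dec_right[OF y(3)[OF p01] neg] by blast
    define hh where "hh = min (d / 2) ((1 - p) / 2)"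
    have hh1: "hh \<le> (1 - p) / 2" unfolding hh_def by (rule min.cobounded2)
    have hh: "hh > 0" "hh < d" "p + hh \<le> 1" using d(1) p01 hh1 by (auto simp: hh_def)
    have "p + hh \<in> S" using d(2)[OF hh(1) hh(2)] p hh by (auto simp: S_def)
    then have "p + hh \<le> p" unfolding p_def by (rule cSup_upper[OF _ bS])
    then show False using hh(1) by simp
  qed
  show ?thesis
  proof (intro exI[of _ y])
    show "sol a \<epsilon> y" unfolding sol_def
    proof (intro conjI ballI)
      show "continuous_on {a..1} y" using continuous_on_subset[OF y(1)] a by auto
      show "y 1 = \<epsilon>" by (rule y(2))
      show "y s > 0" if "s \<in> {a..1}" for s using ypos[OF that] \<delta>(1) by simp
      fix s assume s: "s \<in> {a<..<1}"
      have "G s (y s) = c - h s - q s / y s" using ypos[of s] s by (simp add: G_def max_def)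
      then show "(y has_real_derivative (c - h s - q s / y s)) (at s)" using y(3)[of s] s a by auto
    qed
  qed
qed

lemma sol_shrink: "sol a e y \<Longrightarrow> a \<le> a' \<Longrightarrow> sol a' e y"
  unfolding sol_def by (auto intro: continuous_on_subset)

lemma sol_order:
  assumes u: "sol a e1 u" and v: "sol a e2 v" and e: "e1 \<le> e2" and \<phi>: "\<phi> \<in> {a..1}" and a: "0 < a"
  shows "u \<phi> \<le> v \<phi>"
proof (rule ccontr)
  assume "\<not> u \<phi> \<le> v \<phi>"
  then have neg: "v \<phi> - u \<phi> < 0" by simp
  define D where "D x = v x - u x" for x
  have cD: "continuous_on {a..1} D" unfolding D_def using u v unfolding sol_def
    by (intro continuous_intros) auto
  define S where "S = {\<phi>..1} \<inter> D -` {0..}"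
  have cS: "closed S" unfolding S_def
    by (rule continuous_closed_preimage[OF continuous_on_subset[OF cD]]) (use \<phi> in auto)
  have 1: "1 \<in> S" using u v e \<phi> unfolding S_def D_def sol_def by auto
  have neS: "S \<noteq> {}" using 1 by auto
  have bS: "bdd_below S" unfolding S_def by (auto intro: bdd_belowI[of _ \<phi>])
  define p where "p = Inf S"
  have pS: "p \<in> S" unfolding p_def by (rule closed_contains_Inf[OF neS bS cS])
  have p: "\<phi> \<le> p" "p \<le> 1" "D p \<ge> 0" using pS by (auto simp: S_def)
  have pne: "p \<noteq> \<phi>" using p(3) neg by (auto simp: D_def)
  have below: "D t < 0" if "t \<in> {\<phi>..<p}" for t
  proof (rule ccontr)
    assume "\<not> D t < 0"
    then have "t \<in> S" using that p by (auto simp: S_def)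
    then have "p \<le> t" unfolding p_def by (rule cInf_lower[OF _ bS])
    then show False using that by simp
  qed
  have "D p \<le> D \<phi> + 0 * (p - \<phi>)"
  proof (rule deriv_ub[where f'="\<lambda>t. (c - h t - q t / v t) - (c - h t - q t / u t)"])
    show "\<phi> \<le> p" by (rule p(1))
    show "continuous_on {\<phi>..p} D" using continuous_on_subset[OF cD] \<phi> p by auto
    show "(D has_real_derivative (c - h t - q t / v t) - (c - h t - q t / u t)) (at t)"
      if "t \<in> {\<phi><..<p}" for t
    proof -
      have t: "t \<in> {a<..<1}" using that \<phi> p by auto
      show ?thesis unfolding D_def[abs_def]
        using u v t unfolding sol_def by (intro DERIV_diff) auto
    qed
    show "(c - h t - q t / v t) - (c - h t - q t / u t) \<le> 0" if "t \<in> {\<phi><..<p}" for t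
    proof -
      have t: "t \<in> {a..1}" "t \<in> {0..1}" using that \<phi> p a by auto
      have "D t < 0" using below[of t] that by auto
      then have "v t \<le> u t" by (simp add: D_def)
      moreover have "0 < v t" using v t unfolding sol_def by auto
      ultimately have "q t / u t \<le> q t / v t" using qnn[OF t(2)] by (intro divide_left_mono) auto
      then show ?thesis by simp
    qed
  qed
  then show False using p(3) neg by (simp add: D_def)
qed

lemma sol_lower:
  assumes s: "s \<in> {0<..<1}"
  shows "\<exists>\<beta>>0. \<forall>a e y. sol a e y \<longrightarrow> a \<le> s \<longrightarrow> \<beta> \<le> y s"
proof -
  obtain C where C: "C > 0" "\<And>x. x\<in>{0..1} \<Longrightarrow> c - h x \<le> C" using Cbound by blast
  define \<eta> where "\<eta> = (1 - s) / 2"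
  have \<eta>: "\<eta> > 0" "s + \<eta> < 1" using s by (auto simp: \<eta>_def field_simps)
  obtain t0 where t0: "t0 \<in> {s..s+\<eta>}" "\<And>t. t \<in> {s..s+\<eta>} \<Longrightarrow> q t0 \<le> q t"
    using continuous_attains_inf[of "{s..s+\<eta>}" q] continuous_on_subset[OF qc, of "{s..s+\<eta>}"] s \<eta>
    by fastforce
  define m where "m = q t0"
  have m: "m > 0" using qpos[of t0] t0(1) s \<eta> by (auto simp: m_def)
  define \<beta> where "\<beta> = min (m / (4 * C)) (C * \<eta>)"
  show ?thesis
  proof (intro exI[of _ \<beta>] conjI allI impI)
    show "\<beta> > 0" using m C \<eta> by (simp add: \<beta>_def)
    fix a e y assume y: "sol a e y" and as: "a \<le> s"
    show "\<beta> \<le> y s"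
    proof (rule ccontr)
      assume "\<not> \<beta> \<le> y s"
      then have ysb: "y s < m / (4 * C)" "y s < C * \<eta>" by (auto simp: \<beta>_def)
      have cy: "continuous_on {a..1} y" and ypos: "\<And>t. t \<in> {a..1} \<Longrightarrow> 0 < y t"
        and yd: "\<And>t. t \<in> {a<..<1} \<Longrightarrow> (y has_real_derivative (c - h t - q t / y t)) (at t)"
        using y unfolding sol_def by auto
      have ys0: "0 < y s" using ypos[of s] as s by auto
      define \<tau> where "\<tau> = y s / C"
      have \<tau>: "\<tau> > 0" "\<tau> < \<eta>" using ys0 C ysb(2) by (auto simp: \<tau>_def field_simps)
      have dC: "c - h x - q x / y x \<le> C" if "x \<in> {s<..<1}" for x
      proof -
        have "0 \<le> q x / y x" using qnn[of x] ypos[of x] that as s by auto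
        then show ?thesis using C(2)[of x] that as s by auto
      qed
      have b1: "y t \<le> 2 * y s" if t: "t \<in> {s..s+\<tau>}" for t
      proof -
        have "y t \<le> y s + C * (t - s)"
        proof (rule deriv_ub[OF _ _ yd dC])
          show "s \<le> t" using t by simp
          show "continuous_on {s..t} y" using continuous_on_subset[OF cy] t as \<tau> \<eta> by auto
          show "x \<in> {a<..<1}" if "x \<in> {s<..<t}" for x using that t as \<tau> \<eta> by auto
          show "x \<in> {s<..<1}" if "x \<in> {s<..<t}" for x using that t as \<tau> \<eta> by auto
        qed
        also have "\<dots> \<le> y s + C * \<tau>" using t C by (intro add_left_mono mult_left_mono) auto
        also have "C * \<tau> = y s" using C by (simp add: \<tau>_def)
        finally show ?thesis by simp
      qed
      have "y (s + \<tau>) \<le> y s + (C - m / (2 * y s)) * (s + \<tau> - s)"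
      proof (rule deriv_ub[OF _ _ yd])
        show "s \<le> s + \<tau>" using \<tau> by simp
        show "continuous_on {s..s+\<tau>} y" using continuous_on_subset[OF cy] as \<tau> \<eta> s by auto
        show "x \<in> {a<..<1}" if "x \<in> {s<..<s+\<tau>}" for x using that as \<tau> \<eta> by auto
        show "c - h x - q x / y x \<le> C - m / (2 * y s)" if x: "x \<in> {s<..<s+\<tau>}" for x
        proof -
          have xa: "x \<in> {a<..<1}" "x \<in> {0..1}" using x as \<tau> \<eta> s by auto
          have "m \<le> q x" unfolding m_def using t0(2)[of x] x \<tau> by auto
          moreover have "y x \<le> 2 * y s" using b1[of x] x by auto
          moreover have "0 < y x" using ypos[of x] xa by auto
          ultimately have "m / (2 * y s) \<le> q x / y x" using m by (intro frac_le) auto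
          then show ?thesis using C(2)[OF xa(2)] by linarith
        qed
      qed
      also have "(C - m / (2 * y s)) * (s + \<tau> - s) = y s - m / (2 * C)"
        using C ys0 by (simp add: \<tau>_def field_simps)
      finally have "y (s + \<tau>) \<le> 2 * y s - m / (2 * C)" by simp
      also have "\<dots> < 0" using ysb(1) C by (simp add: field_simps)
      finally show False using ypos[of "s + \<tau>"] as s \<tau> \<eta> by auto
    qed
  qed
qed

definition aa :: "nat \<Rightarrow> real" where "aa n = 1 / (real n + 2)"
definition ee :: "nat \<Rightarrow> real" where "ee n = 1 / (real n + 1)"
definition ys :: "nat \<Rightarrow> real \<Rightarrow> real" where "ys n = (SOME y. sol (aa n) (ee n) y)"
definition NN :: "real \<Rightarrow> nat" where "NN \<phi> = nat \<lceil>1 / \<phi>\<rceil>"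
definition y0 :: "real \<Rightarrow> real" where "y0 \<phi> = lim (\<lambda>n. ys n \<phi>)"
definition W :: "real \<Rightarrow> real" where "W \<phi> = integral {\<phi>..1} (\<lambda>s. c - h s)"

lemma aa: "0 < aa n" "aa n < 1" by (auto simp: aa_def)
lemma aa_mono: "n \<le> m \<Longrightarrow> aa m \<le> aa n" by (auto simp: aa_def frac_le)
lemma ee_mono: "n \<le> m \<Longrightarrow> ee m \<le> ee n" by (auto simp: ee_def frac_le)

lemma ys_sol: "sol (aa n) (ee n) (ys n)"
proof -
  have "\<exists>y. sol (aa n) (ee n) y" by (rule exact_exist) (auto simp: ee_def aa)
  then show ?thesis unfolding ys_def by (rule someI_ex)
qed

lemma ys_pos: "\<phi> \<in> {aa n..1} \<Longrightarrow> 0 < ys n \<phi>"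
  using ys_sol[of n] unfolding sol_def by auto

lemma ys_dec: "n \<le> m \<Longrightarrow> \<phi> \<in> {aa n..1} \<Longrightarrow> ys m \<phi> \<le> ys n \<phi>"
  by (rule sol_order[OF sol_shrink[OF ys_sol[of m] aa_mono] ys_sol[of n] ee_mono]) (auto simp: aa)

lemma NN: assumes "\<phi> \<in> {0<..1}" "NN \<phi> \<le> n" shows "aa n \<le> \<phi>"
proof -
  have "1 / \<phi> \<le> real (NN \<phi>)" unfolding NN_def by linarith
  also have "\<dots> \<le> real n + 2" using assms by simp
  finally have "1 / \<phi> \<le> real n + 2" .
  then show ?thesis using assms(1) by (auto simp: aa_def field_simps)
qed

lemma y0_lim: assumes \<phi>: "\<phi> \<in> {0<..1}" shows "(\<lambda>n. ys n \<phi>) \<longlonglongrightarrow> y0 \<phi>"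
proof -
  define X where "X k = ys (k + NN \<phi>) \<phi>" for k
  have "decseq X" unfolding decseq_def X_def
    using ys_dec NN[OF \<phi>] \<phi> by (metis add_le_cancel_right atLeastAtMost_iff greaterThanAtMost_iff le_add2)
  moreover have "\<forall>i. 0 \<le> X i" unfolding X_def using ys_pos NN[OF \<phi>] \<phi>
    by (metis atLeastAtMost_iff greaterThanAtMost_iff le_add2 less_eq_real_def)
  ultimately obtain l where "X \<longlonglongrightarrow> l" by (rule decseq_convergent)
  then have "(\<lambda>n. ys n \<phi>) \<longlonglongrightarrow> l" unfolding X_def by (rule LIMSEQ_offset)
  then show ?thesis unfolding y0_def by (simp add: limI)
qed

lemma y0_le: assumes "\<phi> \<in> {0<..1}" "NN \<phi> \<le> n" shows "y0 \<phi> \<le> ys n \<phi>"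
proof (rule LIMSEQ_le_const2[OF y0_lim[OF assms(1)]])
  show "\<exists>N. \<forall>m\<ge>N. ys m \<phi> \<le> ys n \<phi>"
    using ys_dec NN[OF assms] assms(1) by (intro exI[of _ n]) auto
qed

lemma y0_pos: assumes s: "s \<in> {0<..<1}" shows "0 < y0 s"
proof -
  obtain \<beta> where \<beta>: "\<beta> > 0" "\<And>a e y. sol a e y \<Longrightarrow> a \<le> s \<Longrightarrow> \<beta> \<le> y s"
    using sol_lower[OF s] by blast
  have s1: "s \<in> {0<..1}" using s by auto
  have "\<beta> \<le> y0 s"
  proof (rule LIMSEQ_le_const[OF y0_lim[OF s1]])
    show "\<exists>N. \<forall>n\<ge>N. \<beta> \<le> ys n s"
      using \<beta>(2)[OF ys_sol NN[OF s1]] by blast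
  qed
  then show ?thesis using \<beta>(1) by simp
qed

lemma y0_1: "y0 1 = 0"
proof -
  have "(\<lambda>n. ys n 1) = (\<lambda>n. inverse (real (Suc n)))"
    using ys_sol unfolding sol_def ee_def by (auto simp: fun_eq_iff divide_inverse add.commute)
  then have "(\<lambda>n. ys n 1) \<longlonglongrightarrow> 0" using LIMSEQ_inverse_real_of_nat by simp
  then show ?thesis using y0_lim[of 1] LIMSEQ_unique by auto
qed

lemma ys_int: assumes \<phi>: "\<phi> \<in> {aa n..1}"
  shows "((\<lambda>s. q s / ys n s) has_integral (W \<phi> - ee n + ys n \<phi>)) {\<phi>..1}"
proof -
  have sub: "{\<phi>..1} \<subseteq> {0..1}" using \<phi> aa[of n] by auto
  have s: "sol (aa n) (ee n) (ys n)" by (rule ys_sol)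
  have ftc: "((\<lambda>s. c - h s - q s / ys n s) has_integral (ys n 1 - ys n \<phi>)) {\<phi>..1}"
  proof (rule fundamental_theorem_of_calculus_interior)
    show "\<phi> \<le> 1" using \<phi> by simp
    show "continuous_on {\<phi>..1} (ys n)" using s \<phi> unfolding sol_def by (auto intro: continuous_on_subset)
    show "(ys n has_vector_derivative c - h x - q x / ys n x) (at x)" if "x \<in> {\<phi><..<1}" for x
      using s that \<phi> unfolding sol_def by (auto simp: has_real_derivative_iff_has_vector_derivative[symmetric])
  qed
  have wi: "((\<lambda>s. c - h s) has_integral W \<phi>) {\<phi>..1}" unfolding W_def
    by (intro integrable_integral integrable_continuous_interval continuous_intros continuous_on_subset[OF h_cont sub])
  have "((\<lambda>s. (c - h s) - (c - h s - q s / ys n s)) has_integral (W \<phi> - (ys n 1 - ys n \<phi>))) {\<phi>..1}"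
    by (rule has_integral_diff[OF wi ftc])
  moreover have "ys n 1 = ee n" using s unfolding sol_def by simp
  moreover have "W \<phi> - (ee n - ys n \<phi>) = W \<phi> - ee n + ys n \<phi>" by simp
  moreover have "(\<lambda>s. (c - h s) - (c - h s - q s / ys n s)) = (\<lambda>s. q s / ys n s)" by (simp add: fun_eq_iff)
  ultimately show ?thesis by (simp only:)
qed

lemma y0_int: assumes \<phi>: "\<phi> \<in> {0<..1}"
  shows "((\<lambda>s. q s / y0 s) has_integral (W \<phi> + y0 \<phi>)) {\<phi>..1}"
proof (cases "\<phi> = 1")
  case True
  have "W 1 = 0" by (simp add: W_def)
  then show ?thesis using True y0_1 by (simp add: has_integral_refl(2))
next
  case False
  then have \<phi>1: "\<phi> < 1" using \<phi> by simp
  define N where "N = NN \<phi>"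
  define f where "f k = (\<lambda>s. q s / ys (k + N) s)" for k
  have aN: "aa (k + N) \<le> \<phi>" for k using NN[OF \<phi>] by (simp add: N_def)
  have fint: "(f k has_integral (W \<phi> - ee (k + N) + ys (k + N) \<phi>)) {\<phi>..1}" for k
    unfolding f_def by (rule ys_int) (use aN[of k] \<phi> in auto)
  have lim1: "(\<lambda>k. ys (k + N) \<phi>) \<longlonglongrightarrow> y0 \<phi>" by (rule LIMSEQ_ignore_initial_segment[OF y0_lim[OF \<phi>]])
  have lime: "(\<lambda>k. ee (k + N)) \<longlonglongrightarrow> 0"
  proof -
    have "(\<lambda>n. ee n) = (\<lambda>n. inverse (real (Suc n)))" by (auto simp: fun_eq_iff ee_def divide_inverse add.commute)
    then have "(\<lambda>n. ee n) \<longlonglongrightarrow> 0" using LIMSEQ_inverse_real_of_nat by simp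
    then show ?thesis by (rule LIMSEQ_ignore_initial_segment)
  qed
  have mct: "(\<lambda>s. q s / y0 s) integrable_on {\<phi>..1} \<and>
     ((\<lambda>k. integral {\<phi>..1} (f k)) \<longlonglongrightarrow> integral {\<phi>..1} (\<lambda>s. q s / y0 s))"
  proof (rule monotone_convergence_increasing)
    show "f k integrable_on {\<phi>..1}" for k using fint[of k] by blast
    show "f k s \<le> f (Suc k) s" if s: "s \<in> {\<phi>..1}" for k s
    proof -
      have sa: "s \<in> {aa (k + N)..1}" using s aN[of k] by auto
      have sa': "s \<in> {aa (Suc k + N)..1}" using s aN[of "Suc k"] by auto
      have "ys (Suc k + N) s \<le> ys (k + N) s" by (rule ys_dec[OF _ sa]) simp
      moreover have "0 < ys (Suc k + N) s" by (rule ys_pos[OF sa'])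
      moreover have "0 \<le> q s" using qnn[of s] s \<phi> by auto
      ultimately show ?thesis unfolding f_def by (intro divide_left_mono) auto
    qed
    show "(\<lambda>k. f k s) \<longlonglongrightarrow> q s / y0 s" if s: "s \<in> {\<phi>..1}" for s
    proof (cases "s = 1")
      case True
      then show ?thesis by (simp add: f_def q1)
    next
      case False
      then have s01: "s \<in> {0<..<1}" using s \<phi> by auto
      have "(\<lambda>k. ys (k + N) s) \<longlonglongrightarrow> y0 s"
        by (rule LIMSEQ_ignore_initial_segment[OF y0_lim]) (use s01 in auto)
      then show ?thesis unfolding f_def
        by (intro tendsto_divide tendsto_const) (use y0_pos[OF s01] in auto)
    qed
    show "bounded (range (\<lambda>k. integral {\<phi>..1} (f k)))"
    proof -
      have "\<bar>integral {\<phi>..1} (f k)\<bar> \<le> \<bar>W \<phi>\<bar> + 1 + ys N \<phi>" for k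
      proof -
        have "integral {\<phi>..1} (f k) = W \<phi> - ee (k + N) + ys (k + N) \<phi>" using fint[of k] by blast
        moreover have "0 < ee (k + N)" "ee (k + N) \<le> 1" by (auto simp: ee_def)
        moreover have "0 < ys (k + N) \<phi>" using ys_pos[of \<phi> "k + N"] aN[of k] \<phi> by auto
        moreover have "ys (k + N) \<phi> \<le> ys N \<phi>" using ys_dec[of N "k + N" \<phi>] aN[of 0] \<phi> by auto
        ultimately show ?thesis by (simp add: abs_le_iff) linarith
      qed
      then show ?thesis unfolding bounded_iff by (intro exI[of _ "\<bar>W \<phi>\<bar> + 1 + ys N \<phi>"]) auto
    qed
  qed
  have "(\<lambda>k. integral {\<phi>..1} (f k)) \<longlonglongrightarrow> W \<phi> - 0 + y0 \<phi>"
  proof -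
    have "(\<lambda>k. integral {\<phi>..1} (f k)) = (\<lambda>k. W \<phi> - ee (k + N) + ys (k + N) \<phi>)"
      using fint by (auto simp: fun_eq_iff)
    then show ?thesis by (simp only:) (intro tendsto_intros lime lim1)
  qed
  then have "integral {\<phi>..1} (\<lambda>s. q s / y0 s) = W \<phi> + y0 \<phi>"
    using mct LIMSEQ_unique by fastforce
  then show ?thesis using mct by (metis has_integral_integral)
qed

lemma y0_eq: assumes "\<phi> \<in> {0<..1}" shows "y0 \<phi> = integral {\<phi>..1} (\<lambda>s. q s / y0 s) - W \<phi>"
  using integral_unique[OF y0_int[OF assms]] by simp

lemma g_int: assumes "a \<in> {0<..1}" shows "(\<lambda>s. q s / y0 s) integrable_on {a..1}"
  using y0_int[OF assms] by blast

lemma W_cont: "continuous_on {0..1} W"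
  unfolding W_def
  by (rule indefinite_integral_continuous_1', rule integrable_continuous_interval)
     (intro continuous_intros h_cont)

lemma y0_cont: assumes a: "a \<in> {0<..1}" shows "continuous_on {a..1} y0"
proof (rule continuous_on_eq)
  show "continuous_on {a..1} (\<lambda>x. integral {x..1} (\<lambda>s. q s / y0 s) - W x)"
    using a by (intro continuous_intros indefinite_integral_continuous_1'[OF g_int[OF a]]
        continuous_on_subset[OF W_cont]) auto
  show "integral {x..1} (\<lambda>s. q s / y0 s) - W x = y0 x" if "x \<in> {a..1}" for x
    using y0_eq[of x] that a by auto
qed

lemma y0_deriv: assumes s: "s \<in> {0<..<1}"
  shows "(y0 has_real_derivative (c - h s - q s / y0 s)) (at s)"
proof -
  define a where "a = s / 2"
  define b where "b = (1 + s) / 2"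
  have ab: "0 < a" "a < s" "s < b" "b < 1" using s by (auto simp: a_def b_def)
  define g where "g s = q s / y0 s" for s
  have gc: "continuous_on {a..b} g" unfolding g_def
  proof (intro continuous_on_divide)
    show "continuous_on {a..b} q" using continuous_on_subset[OF qc] ab by auto
    show "continuous_on {a..b} y0" using continuous_on_subset[OF y0_cont[of a]] ab by auto
    show "\<forall>x\<in>{a..b}. y0 x \<noteq> 0"
    proof
      fix x assume "x \<in> {a..b}"
      then have "x \<in> {0<..<1}" using ab by auto
      from y0_pos[OF this] show "y0 x \<noteq> 0" by simp
    qed
  qed
  have d1: "((\<lambda>x. integral {x..b} g) has_real_derivative - g s) (at s)"
    using integral_has_real_derivative'[OF gc, of s] ab by (simp add: at_within_Icc_at)
  have d2: "(W has_real_derivative - (c - h s)) (at s)"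
  proof -
    have "continuous_on {0..1} (\<lambda>s. c - h s)" by (intro continuous_intros h_cont)
    from integral_has_real_derivative'[OF this, of s] s show ?thesis
      unfolding W_def[abs_def] by (simp add: at_within_Icc_at)
  qed
  have dP: "((\<lambda>x. integral {x..b} g + integral {b..1} g - W x) has_real_derivative (- g s + 0 - - (c - h s))) (at s)"
    by (rule DERIV_diff[OF DERIV_add[OF d1 DERIV_const] d2])
  show ?thesis
  proof (rule has_field_derivative_transform_within_open[OF _ open_greaterThanLessThan[of a b]])
    show "s \<in> {a<..<b}" using ab by auto
    show "((\<lambda>x. integral {x..b} g + integral {b..1} g - W x) has_real_derivative (c - h s - q s / y0 s)) (at s)"
    proof -
      have e: "- g s + 0 - - (c - h s) = c - h s - q s / y0 s" by (simp add: g_def)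
      show ?thesis using dP unfolding e .
    qed
    show "integral {x..b} g + integral {b..1} g - W x = y0 x" if "x \<in> {a<..<b}" for x
    proof -
      have x: "x \<in> {0<..1}" using that ab by auto
      have gi: "g integrable_on {x..1}" using g_int[OF x] unfolding g_def[abs_def] .
      have "integral {x..b} g + integral {b..1} g = integral {x..1} g"
        using Henstock_Kurzweil_Integration.integral_combine[where a=x and c=b and b=1 and f=g] that ab gi by auto
      moreover have "g = (\<lambda>s. q s / y0 s)" by (simp add: g_def[abs_def])
      ultimately show ?thesis using y0_eq[OF x] by simp
    qed
  qed
qed

end



locale ctx2 = ctx +
  fixes f :: "real \<Rightarrow> real"
  assumes f_deriv: "\<And>x. x \<in> {0..1} \<Longrightarrow> (f has_real_derivative h x) (at x within {0..1})"
    and f0: "f 0 = 0"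
    and limq: "Limsup (at_right 0) (\<lambda>x. ereal (q x / x)) < \<infinity>"
    and cc: "c > (SUP x\<in>{0<..1}. f x / x) + 2 * sqrt (SUP x\<in>{0<..1}. q x / x)"
begin

lemma f_cont: "continuous_on {0..1} f"
  by (rule DERIV_continuous_on[OF f_deriv])

lemma bddf: "bdd_above ((\<lambda>x. f x / x) ` {0<..1})"
proof -
  obtain Hb where Hb: "Hb \<ge> 0" "\<And>x. x\<in>{0..1} \<Longrightarrow> \<bar>h x\<bar> \<le> Hb" using hbound by blast
  have hx: "f x / x \<le> Hb" if x: "x \<in> {0<..1}" for x
  proof -
    have "f x \<le> f 0 + Hb * (x - 0)"
    proof (rule deriv_ub)
      show "0 \<le> x" using x by simp
      show "continuous_on {0..x} f" using continuous_on_subset[OF f_cont] x by auto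
      show "(f has_real_derivative h t) (at t)" if "t \<in> {0<..<x}" for t
        using f_deriv[of t] that x by (auto simp: at_within_Icc_at)
      show "h t \<le> Hb" if "t \<in> {0<..<x}" for t using Hb(2)[of t] that x by auto
    qed
    then show ?thesis using x f0 by (simp add: field_simps)
  qed
  show ?thesis by (rule bdd_aboveI2[OF hx])
qed

lemma bddq: "bdd_above ((\<lambda>x. q x / x) ` {0<..1})"
proof -
  obtain Q where Q: "Q > 0" "\<And>x. x\<in>{0..1} \<Longrightarrow> q x \<le> Q" using qbound by blast
  obtain n :: nat where n: "Limsup (at_right 0) (\<lambda>x. ereal (q x / x)) < ereal (real n)"
    using limq less_PInf_Ex_of_nat by auto
  have "eventually (\<lambda>x. ereal (q x / x) < ereal (real n)) (at_right 0)"
    by (rule Limsup_lessD[OF n])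
  then obtain d where d: "d > 0" "\<And>y. 0 < y \<Longrightarrow> y < d \<Longrightarrow> q y / y < real n"
    unfolding eventually_at_right_field by auto
  define d' where "d' = min d 1"
  have d': "0 < d'" "d' \<le> d" "d' \<le> 1" using d by (auto simp: d'_def)
  have hx: "q x / x \<le> max (real n) (Q / d')" if x: "x \<in> {0<..1}" for x
  proof (cases "x < d")
    case True
    then show ?thesis using d(2)[of x] x by auto
  next
    case False
    then have "d' \<le> x" using d' by simp
    then have "q x / x \<le> Q / d'" using Q(2)[of x] x d' qnn[of x] by (intro frac_le) auto
    then show ?thesis by simp
  qed
  show ?thesis by (rule bdd_aboveI2[OF hx])
qed

definition A where "A = (SUP x\<in>{0<..1}. f x / x)"
definition B where "B = (SUP x\<in>{0<..1}. q x / x)"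
definition k where "k = c - A"
definition lam where "lam = k / 2"
definition mu where "mu = k - B / lam"
definition F where "F x = c * x - f x" for x

lemma fA: "x \<in> {0<..1} \<Longrightarrow> f x \<le> A * x"
proof -
  assume x: "x \<in> {0<..1}"
  have "f x / x \<le> A" unfolding A_def by (rule cSUP_upper[OF x bddf])
  then show ?thesis using x by (simp add: field_simps)
qed

lemma qB: "x \<in> {0<..1} \<Longrightarrow> q x \<le> B * x"
proof -
  assume x: "x \<in> {0<..1}"
  have "q x / x \<le> B" unfolding B_def by (rule cSUP_upper[OF x bddq])
  then show ?thesis using x by (simp add: field_simps)
qed

lemma Bpos: "B > 0"
proof -
  have "q (1/2) / (1/2) \<le> B" unfolding B_def by (rule cSUP_upper[OF _ bddq]) auto
  moreover have "q (1/2) > 0" by (rule qpos) auto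
  ultimately show ?thesis by simp
qed

lemma kfacts: "k > 0" "k * k > 4 * B"
proof -
  have c': "k > 2 * sqrt B" using cc unfolding k_def A_def B_def by simp
  have s0: "0 \<le> sqrt B" using Bpos by simp
  have s2: "0 \<le> 2 * sqrt B" using s0 by simp
  show kp: "k > 0" using s2 c' by (rule le_less_trans)
  have "(2 * sqrt B) * (2 * sqrt B) = 4 * B" using Bpos by (simp add: algebra_simps)
  moreover have "(2 * sqrt B) * (2 * sqrt B) < k * k"
    by (rule mult_strict_mono[OF c' c' kp s2])
  ultimately show "k * k > 4 * B" by simp
qed

lemma lam_pos: "lam > 0" using kfacts by (simp add: lam_def)

lemma mu_gt: "mu > lam"
proof -
  have "B / lam = 2 * B / k" using kfacts by (simp add: lam_def field_simps)
  also have "\<dots> < k / 2" using kfacts by (simp add: field_simps)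
  finally show ?thesis unfolding mu_def lam_def by simp
qed

lemma F_cont: "continuous_on {0..1} F"
  unfolding F_def[abs_def] by (intro continuous_intros f_cont)

lemma F0: "F 0 = 0" by (simp add: F_def f0)

lemma Fk: "x \<in> {0<..1} \<Longrightarrow> k * x \<le> F x"
  using fA[of x] by (simp add: F_def k_def algebra_simps)

lemma W_F: assumes \<phi>: "\<phi> \<in> {0..1}" shows "W \<phi> = F 1 - F \<phi>"
proof -
  have "((\<lambda>s. c - h s) has_integral (F 1 - F \<phi>)) {\<phi>..1}"
  proof (rule fundamental_theorem_of_calculus)
    show "\<phi> \<le> 1" using \<phi> by simp
    show "(F has_vector_derivative c - h x) (at x within {\<phi>..1})" if "x \<in> {\<phi>..1}" for x
    proof -
      have x: "x \<in> {0..1}" using that \<phi> by auto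
      have "(F has_real_derivative c * 1 - h x) (at x within {0..1})"
        unfolding F_def[abs_def] by (intro DERIV_diff DERIV_cmult DERIV_ident f_deriv x)
      then have "(F has_real_derivative c - h x) (at x within {0..1})" by simp
      then have "(F has_real_derivative c - h x) (at x within {\<phi>..1})"
        by (rule DERIV_subset) (use \<phi> in auto)
      then show ?thesis by (simp add: has_real_derivative_iff_has_vector_derivative)
    qed
  qed
  then show ?thesis unfolding W_def by (rule integral_unique)
qed

lemma y0_nn: "x \<in> {0<..1} \<Longrightarrow> 0 \<le> y0 x"
  using y0_pos[of x] y0_1 by (cases "x = 1") (auto simp: less_eq_real_def)

lemma g_nn: "x \<in> {0<..1} \<Longrightarrow> 0 \<le> q x / y0 x"
  using y0_nn[of x] qnn[of x] by auto

definition H where "H x = y0 x - F x" for x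

lemma H_eq: "\<phi> \<in> {0<..1} \<Longrightarrow> H \<phi> = integral {\<phi>..1} (\<lambda>s. q s / y0 s) - F 1"
  using y0_eq[of \<phi>] W_F[of \<phi>] by (auto simp: H_def)

lemma H_diff: assumes "t \<in> {0<..1}" "t \<le> \<phi>" "\<phi> \<le> 1"
  shows "H t = H \<phi> + integral {t..\<phi>} (\<lambda>s. q s / y0 s)"
proof -
  have "integral {t..\<phi>} (\<lambda>s. q s / y0 s) + integral {\<phi>..1} (\<lambda>s. q s / y0 s) = integral {t..1} (\<lambda>s. q s / y0 s)"
    using Henstock_Kurzweil_Integration.integral_combine[where a=t and c=\<phi> and b=1 and f="\<lambda>s. q s / y0 s"]
      assms g_int[OF assms(1)] by auto
  then show ?thesis using H_eq[of t] H_eq[of \<phi>] assms by auto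
qed

lemma H_mono: assumes "t \<in> {0<..1}" "t \<le> \<phi>" "\<phi> \<le> 1" shows "H \<phi> \<le> H t"
proof -
  have "0 \<le> integral {t..\<phi>} (\<lambda>s. q s / y0 s)"
  proof (rule Henstock_Kurzweil_Integration.integral_nonneg)
    show "(\<lambda>s. q s / y0 s) integrable_on {t..\<phi>}"
      by (rule integrable_on_subinterval[OF g_int[OF assms(1)]]) (use assms in auto)
    show "0 \<le> q x / y0 x" if "x \<in> {t..\<phi>}" for x using g_nn[of x] that assms by auto
  qed
  then show ?thesis using H_diff[OF assms] by simp
qed

lemma F_small: assumes "e > 0" shows "\<exists>dd>0. \<forall>x. 0 \<le> x \<longrightarrow> x \<le> 1 \<longrightarrow> x < dd \<longrightarrow> \<bar>F x\<bar> < e"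
proof -
  have "0 \<in> {0..1::real}" by simp
  with F_cont assms obtain dd where dd: "dd > 0" "\<forall>x'\<in>{0..1}. dist x' 0 < dd \<longrightarrow> dist (F x') (F 0) < e"
    unfolding continuous_on_iff by blast
  show ?thesis using dd F0 by (intro exI[of _ dd]) (auto simp: dist_real_def)
qed

lemma key_small: assumes d: "d > 0" shows "\<exists>\<phi>. 0 < \<phi> \<and> \<phi> < d \<and> \<phi> \<le> 1 \<and> y0 \<phi> \<le> lam * \<phi>"
proof (rule ccontr)
  assume neg: "\<not> ?thesis"
  have hyp: "lam * \<phi> < y0 \<phi>" if "0 < \<phi>" "\<phi> < d" "\<phi> \<le> 1" for \<phi> using neg that by force
  define d' where "d' = min (d/2) (1/2)"
  have d': "0 < d'" "d' < d" "d' < 1" using d by (auto simp: d'_def)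
  define E where "E = {d'..1} \<inter> (\<lambda>x. y0 x - lam * x) -` {..0}"
  have cE: "closed E" unfolding E_def
    by (rule continuous_closed_preimage) (use y0_cont[of d'] d' in \<open>auto intro!: continuous_intros\<close>)
  have 1: "1 \<in> E" using y0_1 lam_pos d' by (auto simp: E_def)
  have neE: "E \<noteq> {}" using 1 by auto
  have bE: "bdd_below E" unfolding E_def by (auto intro: bdd_belowI[of _ d'])
  define p where "p = Inf E"
  have pE: "p \<in> E" unfolding p_def by (rule closed_contains_Inf[OF neE bE cE])
  have p: "d' \<le> p" "p \<le> 1" "y0 p \<le> lam * p" using pE by (auto simp: E_def)
  have above: "lam * s < y0 s" if s: "0 < s" "s < p" for s
  proof (cases "s < d'")
    case True
    then show ?thesis using hyp[of s] s d' p by auto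
  next
    case False
    show ?thesis
    proof (rule ccontr)
      assume "\<not> lam * s < y0 s"
      then have "s \<in> E" using False s p by (auto simp: E_def)
      then have "p \<le> s" unfolding p_def by (rule cInf_lower[OF _ bE])
      then show False using s by simp
    qed
  qed
  have lower: "mu * s \<le> y0 s" if s: "0 < s" "s < p" for s
  proof -
    have s1: "s \<in> {0<..1}" using s p by auto
    have Hs: "- (B / lam) * s \<le> H s"
    proof (rule ccontr)
      assume "\<not> - (B / lam) * s \<le> H s"
      define e where "e = - (B / lam) * s - H s"
      have e: "e > 0" using \<open>\<not> - (B / lam) * s \<le> H s\<close> by (simp add: e_def)
      obtain dd where dd: "dd > 0" "\<And>x. 0 \<le> x \<Longrightarrow> x \<le> 1 \<Longrightarrow> x < dd \<Longrightarrow> \<bar>F x\<bar> < e"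
        using F_small[OF e] by blast
      define t where "t = min (s/2) (dd/2)"
      have t: "0 < t" "t < s" "t < dd" using s dd by (auto simp: t_def)
      have t1: "t \<in> {0<..1}" using t s1 by auto
      have Ft: "\<bar>F t\<bar> < e" using dd(2)[of t] t s1 by auto
      have Ht: "- F t < H t" using above[of t] t s lam_pos by (simp add: H_def) (smt (verit) mult_pos_pos)
      have "integral {t..s} (\<lambda>r. q r / y0 r) \<le> integral {t..s} (\<lambda>r. B / lam)"
      proof (rule integral_le)
        show "(\<lambda>r. q r / y0 r) integrable_on {t..s}"
          by (rule integrable_on_subinterval[OF g_int[OF t1]]) (use t s1 in auto)
        show "(\<lambda>r. B / lam) integrable_on {t..s}" by (intro integrable_continuous_interval continuous_intros)
        show "q r / y0 r \<le> B / lam" if r: "r \<in> {t..s}" for r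
        proof -
          have r1: "r \<in> {0<..1}" "0 < r" "r < p" using r t s1 s by auto
          have "lam * r < y0 r" by (rule above[OF r1(2) r1(3)])
          moreover have "q r \<le> B * r" by (rule qB[OF r1(1)])
          moreover have "0 < lam * r" using lam_pos r1 by simp
          ultimately have "q r / y0 r \<le> (B * r) / (lam * r)"
            using qnn[of r] r1 by (intro frac_le) (auto simp: Bpos)
          also have "\<dots> = B / lam" using r1 by simp
          finally show ?thesis .
        qed
      qed
      also have "\<dots> = (s - t) * (B / lam)" using t by (simp add: content_real)
      finally have I: "integral {t..s} (\<lambda>r. q r / y0 r) \<le> (s - t) * (B / lam)" .
      have "H t = H s + integral {t..s} (\<lambda>r. q r / y0 r)" by (rule H_diff) (use t1 t s1 in auto)
      moreover have "(s - t) * (B / lam) \<le> s * (B / lam)"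
        using t Bpos lam_pos by (intro mult_right_mono) auto
      ultimately have "H s \<ge> - F t - s * (B / lam)" using Ht I by linarith
      then show False using Ft unfolding e_def by (simp add: abs_less_iff algebra_simps)
    qed
    have "k * s \<le> F s" by (rule Fk[OF s1])
    then have "- (B / lam) * s + k * s \<le> y0 s" using Hs by (simp add: H_def)
    then show ?thesis by (simp add: mu_def algebra_simps)
  qed
  have atp: "mu * p \<le> y0 p"
  proof (rule ccontr)
    assume "\<not> mu * p \<le> y0 p"
    define e where "e = mu * p - y0 p"
    have e: "e > 0" using \<open>\<not> mu * p \<le> y0 p\<close> by (simp add: e_def)
    have cG: "continuous_on {d'/2..1} (\<lambda>x. y0 x - mu * x)"
      using y0_cont[of "d'/2"] d' by (auto intro!: continuous_intros)
    have pin: "p \<in> {d'/2..1}" using p d' by auto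
    obtain dd where dd: "dd > 0" "\<forall>x'\<in>{d'/2..1}. dist x' p < dd \<longrightarrow> dist (y0 x' - mu * x') (y0 p - mu * p) < e"
      using cG pin e unfolding continuous_on_iff by blast
    define x where "x = p - min (dd/2) (d'/2)"
    have mm: "min (dd/2) (d'/2) \<le> d'/2" "min (dd/2) (d'/2) \<le> dd/2" "0 < min (dd/2) (d'/2)"
      using dd d' by auto
    have x: "x \<in> {d'/2..1}" "dist x p < dd" "0 < x" "x < p"
      using mm p d' dd by (auto simp: x_def dist_real_def)
    have "dist (y0 x - mu * x) (y0 p - mu * p) < e" using dd(2) x by blast
    moreover have "mu * x \<le> y0 x" by (rule lower[OF x(3) x(4)])
    ultimately show False unfolding e_def by (simp add: dist_real_def abs_less_iff)
  qed
  have "mu * p \<le> lam * p" using atp p by linarith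
  moreover have "lam * p < mu * p" using mu_gt p d' by (intro mult_strict_right_mono) auto
  ultimately show False by simp
qed

lemma y0_tends0: assumes e: "e > 0" shows "\<exists>\<delta>>0. \<forall>t. 0 < t \<longrightarrow> t < \<delta> \<longrightarrow> t \<le> 1 \<longrightarrow> y0 t < e"
proof -
  have e3: "e / 3 > 0" using e by simp
  obtain dd where dd: "dd > 0" "\<And>x. 0 \<le> x \<Longrightarrow> x \<le> 1 \<Longrightarrow> x < dd \<Longrightarrow> \<bar>F x\<bar> < e / 3"
    using F_small[OF e3] by blast
  define \<delta> where "\<delta> = min dd (e / (3 * lam))"
  have \<delta>: "\<delta> > 0" using dd e lam_pos by (simp add: \<delta>_def)
  show ?thesis
  proof (intro exI[of _ \<delta>] conjI allI impI \<delta>)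
    fix t assume t: "0 < t" "t < \<delta>" "t \<le> 1"
    obtain \<phi> where \<phi>: "0 < \<phi>" "\<phi> < t" "\<phi> \<le> 1" "y0 \<phi> \<le> lam * \<phi>" using key_small[OF t(1)] by blast
    have "H t \<le> H \<phi>" by (rule H_mono) (use \<phi> t in auto)
    then have "y0 t \<le> y0 \<phi> - F \<phi> + F t" by (simp add: H_def)
    moreover have "\<bar>F \<phi>\<bar> < e / 3" using dd(2)[of \<phi>] \<phi> t \<delta>_def by auto
    moreover have "\<bar>F t\<bar> < e / 3" using dd(2)[of t] t \<delta>_def by auto
    moreover have "lam * \<phi> < e / 3"
    proof -
      have "lam * \<phi> < lam * \<delta>" using \<phi> t lam_pos by (intro mult_strict_left_mono) auto
      also have "\<dots> \<le> lam * (e / (3 * lam))" using lam_pos by (intro mult_left_mono) (auto simp: \<delta>_def)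
      also have "\<dots> = e / 3" using lam_pos by simp
      finally show ?thesis .
    qed
    ultimately show "y0 t < e" using \<phi>(4) by (simp add: abs_less_iff)
  qed
qed

end



context ctx2 begin

lemma result: "\<exists>z z' :: real \<Rightarrow> real.
           continuous_on {0..1} z \<and> continuous_on {0<..<1} z' \<and>
           (\<forall>x\<in>{0<..<1}. (z has_real_derivative z' x) (at x)) \<and>
           (\<forall>x\<in>{0<..<1}. z' x = h x - c - q x / z x) \<and>
           (\<forall>x\<in>{0<..<1}. z x < 0) \<and> z 0 = 0 \<and> z 1 = 0"
proof -
  define z where "z x = (if x \<le> 0 then 0 else - y0 x)" for x
  define z' where "z' x = h x - c - q x / z x" for x
  have cz: "continuous_on {0..1} z"
    unfolding continuous_on_iff
  proof (intro ballI allI impI)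
    fix x e :: real assume x: "x \<in> {0..1}" and e: "0 < e"
    show "\<exists>d>0. \<forall>x'\<in>{0..1}. dist x' x < d \<longrightarrow> dist (z x') (z x) < e"
    proof (cases "x = 0")
      case True
      obtain \<delta> where \<delta>: "\<delta> > 0" "\<And>t. 0 < t \<Longrightarrow> t < \<delta> \<Longrightarrow> t \<le> 1 \<Longrightarrow> y0 t < e"
        using y0_tends0[OF e] by blast
      show ?thesis
      proof (intro exI[of _ \<delta>] conjI ballI impI \<delta>(1))
        fix x' assume x': "x' \<in> {0..1}" "dist x' x < \<delta>"
        show "dist (z x') (z x) < e"
        proof (cases "x' = 0")
          case True then show ?thesis using e \<open>x = 0\<close> by (simp add: z_def)
        next
          case False
          then have x1: "x' \<in> {0<..1}" using x' by auto
          have "y0 x' < e" using \<delta>(2)[of x'] x' x1 True by (auto simp: dist_real_def)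
          then show ?thesis using y0_nn[OF x1] x1 True by (auto simp: z_def dist_real_def)
        qed
      qed
    next
      case False
      then have x1: "x \<in> {0<..1}" using x by auto
      have h2: "x/2 \<in> {0<..1}" using x1 by auto
      have xin: "x \<in> {x/2..1}" using x1 by auto
      obtain d where d: "d > 0" "\<forall>x'\<in>{x/2..1}. dist x' x < d \<longrightarrow> dist (y0 x') (y0 x) < e"
        using y0_cont[OF h2, unfolded continuous_on_iff] xin e by blast
      show ?thesis
      proof (intro exI[of _ "min d (x/2)"] conjI ballI impI)
        show "0 < min d (x/2)" using d x1 by auto
        fix x' assume x': "x' \<in> {0..1}" "dist x' x < min d (x/2)"
        then have xx: "\<bar>x' - x\<bar> < x / 2" "\<bar>x' - x\<bar> < d" "x' \<le> 1" by (auto simp: dist_real_def)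
        have lt: "x/2 < x'" using xx(1) abs_less_iff[of "x' - x" "x/2"] by linarith
        have x'': "x' \<in> {x/2..1}" "dist x' x < d" "0 < x'" using x1 xx lt by (auto simp: dist_real_def)
        have "dist (y0 x') (y0 x) < e" using d(2) x'' by blast
        then show "dist (z x') (z x) < e" using x'' x1 by (simp add: z_def dist_real_def abs_minus_commute)
      qed
    qed
  qed
  have zneg: "z x < 0" if "x \<in> {0<..<1}" for x using y0_pos[OF that] that by (simp add: z_def)
  have cz': "continuous_on {0<..<1} z'"
  proof -
    have "continuous_on {0<..<1} (\<lambda>x. h x - c - q x / z x)"
    proof (intro continuous_intros)
      show "continuous_on {0<..<1} h" by (rule continuous_on_subset[OF h_cont]) auto
      show "continuous_on {0<..<1} q" by (rule continuous_on_subset[OF qc]) auto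
      show "continuous_on {0<..<1} z" by (rule continuous_on_subset[OF cz]) auto
      show "\<forall>x\<in>{0<..<1}. z x \<noteq> 0" using zneg by (auto simp: less_imp_neq)
    qed
    then show ?thesis by (simp add: z'_def[abs_def])
  qed
  have dz: "(z has_real_derivative z' x) (at x)" if x: "x \<in> {0<..<1}" for x
  proof (rule has_field_derivative_transform_within_open[OF _ open_greaterThanLessThan x])
    have "((\<lambda>x. - y0 x) has_real_derivative - (c - h x - q x / y0 x)) (at x)"
      by (rule DERIV_minus[OF y0_deriv[OF x]])
    moreover have "- (c - h x - q x / y0 x) = z' x" using x by (simp add: z'_def z_def)
    ultimately show "((\<lambda>x. - y0 x) has_real_derivative z' x) (at x)" by simp
    show "- y0 y = z y" if "y \<in> {0<..<1}" for y using that by (simp add: z_def)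
  qed
  have z0: "z 0 = 0" by (simp add: z_def)
  have z1: "z 1 = 0" by (simp add: z_def y0_1)
  have zeq: "\<forall>x\<in>{0<..<1}. z' x = h x - c - q x / z x" by (simp add: z'_def)
  show ?thesis
    by (rule exI[of _ z], rule exI[of _ z']) (use cz cz' dz zneg z0 z1 zeq in blast)
qed

end

theorem lemma4p1:
  fixes f h q :: "real \<Rightarrow> real" and c :: real
  assumes f_deriv: "\<And>x. x \<in> {0..1} \<Longrightarrow> (f has_real_derivative h x) (at x within {0..1})"
    and h_cont: "continuous_on {0..1} h"
    and f0: "f 0 = 0"
    and q: "cond_q q"
    and c: "c > (SUP x\<in>{0<..1}. f x / x) + 2 * sqrt (SUP x\<in>{0<..1}. q x / x)"
  shows "\<exists>z z' :: real \<Rightarrow> real.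
           continuous_on {0..1} z \<and> continuous_on {0<..<1} z' \<and>
           (\<forall>x\<in>{0<..<1}. (z has_real_derivative z' x) (at x)) \<and>
           (\<forall>x\<in>{0<..<1}. z' x = h x - c - q x / z x) \<and>
           (\<forall>x\<in>{0<..<1}. z x < 0) \<and> z 0 = 0 \<and> z 1 = 0"
proof -
  interpret ctx2 h q c f
  proof unfold_locales
    show "continuous_on {0..1} h" by (rule h_cont)
    show "continuous_on {0..1} q" using q unfolding cond_q_def by blast
    show "q x > 0" if "x \<in> {0<..<1}" for x using q that unfolding cond_q_def by blast
    show "q 0 = 0" using q unfolding cond_q_def by blast
    show "q 1 = 0" using q unfolding cond_q_def by blast
    show "(f has_real_derivative h x) (at x within {0..1})" if "x \<in> {0..1}" for x by (rule f_deriv[OF that])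
    show "f 0 = 0" by (rule f0)
    show "Limsup (at_right 0) (\<lambda>x. ereal (q x / x)) < \<infinity>" using q unfolding cond_q_def by blast
    show "c > (SUP x\<in>{0<..1}. f x / x) + 2 * sqrt (SUP x\<in>{0<..1}. q x / x)" by (rule c)
  qed
  show ?thesis by (rule result)
qed


end
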